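(* Let $f$ be a positive function on $\mathbb R$ such that there exist $M>0$ and $q_1\in(0,1]$ with $f(x)\le M\psi(q_1x)$ for all $x\in\mathbb R$. Then for all $q_2\in(0,1)$ and all $\sigma\in(0,1-q_2^2)$, $$K_\sigma f(x)\le\frac{2}{\sqrt3}M\psi(q_1q_2x)\quad\text{for all }x\in\mathbb R.$$
   Context: $\psi(x)=\pi^{-1/2}e^{-x^2}$, $\psi_\sigma(x)=\sigma^{-1}\psi(x/\sigma)$, $K_\sigma f=f*\psi_\sigma$. *)

theory Defs
  imports "HOL-Analysis.Analysis"
begin

definition psi :: "real \<Rightarrow> real" where
  "psi x = exp (- (x^2)) / sqrt pi"

definition psi_sigma :: "real \<Rightarrow> real \<Rightarrow> real" where
  "psi_sigma \<sigma> x = psi (x / \<sigma>) / \<sigma>"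

definition conv :: "(real \<Rightarrow> real) \<Rightarrow> (real \<Rightarrow> real) \<Rightarrow> real \<Rightarrow> real" where
  "conv f g x = (\<integral>y. f y * g (x - y) \<partial>lborel)"

definition K :: "real \<Rightarrow> (real \<Rightarrow> real) \<Rightarrow> real \<Rightarrow> real" where
  "K \<sigma> f = conv f (psi_sigma \<sigma>)"

end

theory Submission
  imports Defs "HOL-Probability.Probability"
begin

lemma final_ineq:
  fixes q1 q2 s x M :: real
  assumes q1: "0 < q1" "q1 \<le> 1" and q2: "0 < q2" "q2 < 1" and s: "0 < s" "s < 1 - q2^2"
    and M: "M > 0"
  shows "M / q1 * (exp (- (x^2) / (1/q1^2 + s^2)) / (sqrt pi * sqrt (1/q1^2 + s^2)))
         \<le> 2 / sqrt 3 * M * psi (q1 * q2 * x)"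
proof -
  define T where "T = 1/q1^2 + s^2"
  have T: "T > 0" unfolding T_def using q1 by (simp add: add_pos_nonneg)
  have qT: "q1^2 * T = 1 + q1^2 * s^2" unfolding T_def using q1 by (simp add: field_simps)
  have "q1^2 * T \<ge> 1" using qT by (simp add: add_increasing2)
  hence "sqrt (q1^2 * T) \<ge> 1" by simp
  hence sq: "q1 * sqrt T \<ge> 1" using q1 by (simp add: real_sqrt_mult)
  have "0 \<le> q2^2" by simp
  hence s1: "s \<le> 1" using s by linarith
  have "s^2 \<le> s" using s s1 by (simp add: power2_eq_square mult_left_le)
  moreover have "q1^2 \<le> 1" using q1 by (simp add: power_le_one)
  hence "q1^2 * s^2 \<le> 1 * s^2" by (intro mult_right_mono) auto
  ultimately have "q1^2 * s^2 \<le> s" by linarith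
  hence "q2^2 * (1 + q1^2 * s^2) \<le> q2^2 * (2 - q2^2)"
    using s by (intro mult_left_mono) auto
  also have "\<dots> \<le> 1"
  proof -
    have "1 - q2^2*(2-q2^2) = (1-q2^2)^2" by (simp add: power2_eq_square algebra_simps)
    moreover have "(1-q2^2)^2 \<ge> 0" by simp
    ultimately show ?thesis by linarith
  qed
  finally have key: "q2^2 * (q1^2 * T) \<le> 1" using qT by simp
  have "q1^2*q2^2*x^2 \<le> x^2 / T"
  proof -
    have "q1^2*q2^2*x^2 * T = x^2 * (q2^2 * (q1^2 * T))" by (simp add: algebra_simps)
    also have "\<dots> \<le> x^2 * 1" using key by (intro mult_left_mono) auto
    finally have "q1^2*q2^2*x^2 * T \<le> x^2" by simp
    thus ?thesis using T by (simp add: field_simps)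
  qed
  hence e: "exp (- (x^2) / T) \<le> exp (- ((q1*q2*x)^2))"
    by (simp add: power_mult_distrib)
  have "M / q1 * (exp (- (x^2) / T) / (sqrt pi * sqrt T))
        = M * exp (- (x^2) / T) / sqrt pi / (q1 * sqrt T)" by (simp add: field_simps)
  also have "\<dots> \<le> M * exp (- (x^2) / T) / sqrt pi"
    using sq M by (simp add: divide_le_eq)  
  also have "\<dots> \<le> M * exp (- ((q1*q2*x)^2)) / sqrt pi"
    using e M by (simp add: divide_right_mono)
  also have "\<dots> \<le> 2 / sqrt 3 * (M * exp (- ((q1*q2*x)^2)) / sqrt pi)"
  proof -
    have "sqrt 3 \<le> 2" by (rule real_le_lsqrt) auto
    hence "1 \<le> 2 / sqrt 3" by simp
    moreover have "0 \<le> M * exp (- ((q1*q2*x)^2)) / sqrt pi" using M by simp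
    ultimately have "1 * (M * exp (- ((q1*q2*x)^2)) / sqrt pi) \<le> 2 / sqrt 3 * (M * exp (- ((q1*q2*x)^2)) / sqrt pi)"
      by (intro mult_right_mono)
    thus ?thesis by simp
  qed
  finally show ?thesis unfolding T_def psi_def by simp
qed

theorem lemma15:
  fixes f :: "real \<Rightarrow> real" and M q1 :: real
  assumes fpos: "\<And>x. f x > 0"
    and M: "M > 0"
    and q1: "0 < q1" "q1 \<le> 1"
    and bound: "\<And>x. f x \<le> M * psi (q1 * x)"
  shows "\<forall>q2 \<sigma>. 0 < q2 \<and> q2 < 1 \<and> 0 < \<sigma> \<and> \<sigma> < 1 - q2^2 \<longrightarrow>
           (\<forall>x. K \<sigma> f x \<le> 2 / sqrt 3 * M * psi (q1 * q2 * x))"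
proof (intro allI impI)
  fix q2 \<sigma> x :: real
  assume h: "0 < q2 \<and> q2 < 1 \<and> 0 < \<sigma> \<and> \<sigma> < 1 - q2^2"
  define a where "a = 1 / (q1 * sqrt 2)"
  define b where "b = \<sigma> / sqrt 2"
  have a: "a > 0" unfolding a_def using q1 by simp
  have b: "b > 0" unfolding b_def using h by simp
  have a2: "a^2 = 1 / (2 * q1^2)" unfolding a_def by (simp add: power_divide power_mult_distrib)
  have b2: "b^2 = \<sigma>^2 / 2" unfolding b_def by (simp add: power_divide)
  have psi1: "psi (q1 * y) = normal_density 0 a y / q1" for y
  proof -
    have "sqrt (2 * pi * a^2) = sqrt pi / q1" using q1
      by (simp add: a2 real_sqrt_divide real_sqrt_mult)
    moreover have "- (y^2) / (2 * a^2) = - ((q1*y)^2)" using q1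
      by (simp add: a2 power_mult_distrib)
    ultimately show ?thesis using q1 unfolding psi_def normal_density_def
      by (simp add: field_simps)
  qed
  have psis: "psi_sigma \<sigma> z = normal_density 0 b z" for z
  proof -
    have "sqrt (2 * pi * b^2) = \<sigma> * sqrt pi" using h
      by (simp add: b2 real_sqrt_mult)
    moreover have "- (z^2) / (2 * b^2) = - ((z/\<sigma>)^2)" using h
      by (simp add: b2 power_divide)
    ultimately show ?thesis using h unfolding psi_sigma_def psi_def normal_density_def
      by (simp add: field_simps) (metis)
  qed
  have cv: "(\<integral>\<^sup>+y. ennreal (normal_density 0 b (x - y) * normal_density 0 a y) \<partial>lborel)
      = normal_density 0 (sqrt (b^2 + a^2)) x"
    using fun_cong[OF conv_normal_density_zero_mean[OF b a], of x] by simp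
  have "(\<integral>\<^sup>+y. ennreal (f y * psi_sigma \<sigma> (x - y)) \<partial>lborel)
     \<le> (\<integral>\<^sup>+y. ennreal (M / q1) * ennreal (normal_density 0 b (x - y) * normal_density 0 a y) \<partial>lborel)"
  proof (intro nn_integral_mono)
    fix y
    have "f y * psi_sigma \<sigma> (x - y) \<le> M * psi (q1 * y) * psi_sigma \<sigma> (x - y)"
      using bound[of y] by (intro mult_right_mono) (auto simp: psis)
    also have "\<dots> = M / q1 * (normal_density 0 b (x - y) * normal_density 0 a y)"
      by (simp add: psi1 psis)
    finally show "ennreal (f y * psi_sigma \<sigma> (x - y))
      \<le> ennreal (M / q1) * ennreal (normal_density 0 b (x - y) * normal_density 0 a y)"
      using M q1 by (simp add: ennreal_mult'[symmetric] ennreal_leI)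
  qed
  also have "\<dots> = ennreal (M / q1) * normal_density 0 (sqrt (b^2 + a^2)) x"
    by (subst nn_integral_cmult) (auto simp: cv)
  also have "\<dots> = ennreal (M / q1 * normal_density 0 (sqrt (b^2 + a^2)) x)"
    using M q1 by (subst ennreal_mult'[symmetric]) auto
  finally have "K \<sigma> f x \<le> M / q1 * normal_density 0 (sqrt (b^2 + a^2)) x"
    unfolding K_def conv_def using M q1
    by (intro integral_real_bounded) auto
  also have "normal_density 0 (sqrt (b^2 + a^2)) x
      = exp (- (x^2) / (1/q1^2 + \<sigma>^2)) / (sqrt pi * sqrt (1/q1^2 + \<sigma>^2))"
  proof -
    have e: "2 * (b^2 + a^2) = 1/q1^2 + \<sigma>^2" using q1 by (simp add: a2 b2 field_simps)
    have "2 * pi * (sqrt (b^2 + a^2))^2 = pi * (1/q1^2 + \<sigma>^2)"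
      using a b e by simp
    have "sqrt 2 * sqrt (b^2 + a^2) = sqrt (1/q1^2 + \<sigma>^2)"
      by (simp add: real_sqrt_mult[symmetric] e[symmetric])
    thus ?thesis unfolding normal_density_def using e a b
      by (simp add: real_sqrt_mult)
  qed
  also have "M / q1 * \<dots> \<le> 2 / sqrt 3 * M * psi (q1 * q2 * x)"
    using final_ineq[OF q1, of q2 \<sigma> M x] h M by simp
  finally show "K \<sigma> f x \<le> 2 / sqrt 3 * M * psi (q1 * q2 * x)" .
qed

end
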